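(* Fix integers $m \ge 1$ and $n_1,\dots,n_m \ge 2$, and consider the $m$-dimensional single parity-check product code transmitted over the binary erasure channel with erasure probability $\epsilon \in [0,1]$, as described in the context. Let $\mathbf{1} = (1,\dots,1) \in A_{\mathrm{info}}$ be the first information position in the successive cancellation decoding order. Then \[ \Pr[S_m(\mathbf{1}) \text{ is false}] = \Pr[E_m(a) \text{ is false}] \quad \text{for every } a \in A_{\mathrm{info}}. \] That is, the erasure probability of the first decoded information bit under successive cancellation decoding equals the erasure probability of each information bit under Elias' decoding. Moreover, this common value equals $\epsilon_m$, where $\epsilon_0 = \epsilon$ and \[ \epsilon_\ell = \epsilon_{\ell-1}\left(1-(1-\epsilon_{\ell-1})^{n_\ell-1}\right) \quad \text{for } \ell = 1,\dots,m. \]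
   Context: Index set and code. Let $A = \{1,\dots,n_1\}\times\cdots\times\{1,\dots,n_m\}$. The $m$-dimensional single parity-check product code (SPC-PC) consists of all binary arrays $x: A \to \{0,1\}$ such that every line in every direction $\ell$ has even weight; a line in direction $\ell$ is obtained by fixing all coordinates except the $\ell$-th. This is the product of the $(n_\ell, n_\ell-1)$ SPC codes, so $n = \prod_\ell n_\ell$ and $k = \prod_\ell (n_\ell-1)$. The information positions are $A_{\mathrm{info}} = \{a \in A : a_\ell \le n_\ell-1 \text{ for all } \ell\}$; a codeword is uniquely determined by its entries there, and these entries are the information bits. Channel. Each codeword entry is independently erased with probability $\epsilon$ and otherwise received correctly. Notation. For $\ell = 0,\dots,m$ let $A_\ell = \{a \in A : a_i \le n_i-1 \text{ for all } i \le \ell\}$, so $A_0 = A$ and $A_m = A_{\mathrm{info}}$. For $a \in A$ and $b \in \{1,\dots,n_\ell\}$, let $a[\ell\leftarrow b]$ denote $a$ with its $\ell$-th coordinate replaced by $b$. Elias' decoder on the erasure channel. This decoder processes dimensions $1,\dots,m$ in one sweep, applying local SPC decoding to each line. For $a \in A$, $E_0(a)$ is true iff entry $a$ is not erased. For $\ell \ge 1$ and $a \in A_\ell$, $E_\ell(a)$ is true iff $E_{\ell-1}(a)$ is true, or $E_{\ell-1}(a[\ell\leftarrow b])$ is true for all $b \in \{1,\dots,n_\ell\}\setminus\{a_\ell\}$. The information bit at $a \in A_{\mathrm{info}}$ is recovered iff $E_m(a)$ is true, and is declared erased otherwise. Successive cancellation (SC) decoder on the erasure channel. The information bits are decoded in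 lexicographic order of $(a_1,\dots,a_m)$, and each local SPC decision uses the previously decided bits. Assuming all earlier bits were decided correctly, the status is given as follows. $S_0 = E_0$. For $\ell \ge 1$ and $a \in A_\ell$, $S_\ell(a)$ is true iff $S_{\ell-1}(a)$ is true, or $S_{\ell-1}(a[\ell\leftarrow b])$ is true for all $b$ with $a_\ell < b \le n_\ell$. The information bit at $a$ is recovered iff $S_m(a)$ is true. *)

theory Defs
  imports Complex_Main "HOL-Library.FuncSet"
begin

text \<open>Positions are functions a :: nat => nat with a i in {1..n i} for i in {1..m}
  (extensional: undefined outside {1..m}).  The block lengths are n 1, ..., n m.\<close>

definition pos_set :: "nat \<Rightarrow> (nat \<Rightarrow> nat) \<Rightarrow> (nat \<Rightarrow> nat) set" where
  "pos_set m n = PiE {1..m} (\<lambda>i. {1..n i})"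

definition info_set :: "nat \<Rightarrow> (nat \<Rightarrow> nat) \<Rightarrow> (nat \<Rightarrow> nat) set" where
  "info_set m n = PiE {1..m} (\<lambda>i. {1..n i - 1})"

text \<open>An erasure pattern w : positions -> bool, with w a = True iff entry a is NOT erased.\<close>

fun elias :: "(nat \<Rightarrow> nat) \<Rightarrow> nat \<Rightarrow> ((nat \<Rightarrow> nat) \<Rightarrow> bool) \<Rightarrow> (nat \<Rightarrow> nat) \<Rightarrow> bool" where
  "elias n 0 w a = w a"
| "elias n (Suc l) w a =
     (elias n l w a \<or>
      (\<forall>b \<in> {1..n (Suc l)} - {a (Suc l)}. elias n l w (a(Suc l := b))))"

fun sc :: "(nat \<Rightarrow> nat) \<Rightarrow> nat \<Rightarrow> ((nat \<Rightarrow> nat) \<Rightarrow> bool) \<Rightarrow> (nat \<Rightarrow> nat) \<Rightarrow> bool" where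
  "sc n 0 w a = w a"
| "sc n (Suc l) w a =
     (sc n l w a \<or>
      (\<forall>b \<in> {a (Suc l)<..n (Suc l)}. sc n l w (a(Suc l := b))))"

definition bec_prob :: "nat \<Rightarrow> (nat \<Rightarrow> nat) \<Rightarrow> real \<Rightarrow> (((nat \<Rightarrow> nat) \<Rightarrow> bool) \<Rightarrow> bool) \<Rightarrow> real" where
  "bec_prob m n eps P =
     (\<Sum>w \<in> PiE (pos_set m n) (\<lambda>_. UNIV :: bool set).
        (if P w then (\<Prod>a \<in> pos_set m n. if w a then 1 - eps else eps) else 0))"

fun eps_seq :: "(nat \<Rightarrow> nat) \<Rightarrow> real \<Rightarrow> nat \<Rightarrow> real" where
  "eps_seq n eps 0 = eps"
| "eps_seq n eps (Suc l) = eps_seq n eps l * (1 - (1 - eps_seq n eps l) ^ (n (Suc l) - 1))"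

end

theory Submission
  imports Defs "HOL-Probability.Product_PMF"
begin

definition dep :: "'a set \<Rightarrow> (('a \<Rightarrow> 'b) \<Rightarrow> bool) \<Rightarrow> bool" where
  "dep S P \<longleftrightarrow> (\<forall>f g. (\<forall>x\<in>S. f x = g x) \<longrightarrow> P f = P g)"

lemma prob_restr:
  assumes "finite X" "S \<subseteq> X" "dep S P"
  shows "measure (measure_pmf (Pi_pmf X d p)) {f. P f} = measure (measure_pmf (Pi_pmf S d p)) {f. P f}"
proof -
  have "Pi_pmf S d p = map_pmf (\<lambda>f x. if x \<in> S then f x else d) (Pi_pmf X d p)"
    by (rule Pi_pmf_subset[OF assms(1,2)])
  moreover have "(\<lambda>f x. if x \<in> S then f x else d) -` {f. P f} = {f. P f}"
  proof -
    have "P (\<lambda>x. if x \<in> S then f x else d) = P f" for f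
      by (rule assms(3)[unfolded dep_def, rule_format]) simp
    then show ?thesis by auto
  qed
  ultimately show ?thesis by simp
qed

lemma measure_pair_prod:
  "measure (measure_pmf (pair_pmf A B)) (C \<times> D) = measure (measure_pmf A) C * measure (measure_pmf B) D"
proof -
  have "measure (measure_pmf (pair_pmf A B)) (C \<times> D) =
        measure (measure_pmf (pair_pmf A B)) ((C \<times> D) \<inter> set_pmf (pair_pmf A B))"
    by (rule measure_Int_set_pmf[symmetric])
  also have "(C \<times> D) \<inter> set_pmf (pair_pmf A B) = (C \<inter> set_pmf A) \<times> (D \<inter> set_pmf B)"
    by (auto simp: set_pair_pmf)
  also have "measure (measure_pmf (pair_pmf A B)) \<dots> =
      measure (measure_pmf A) (C \<inter> set_pmf A) * measure (measure_pmf B) (D \<inter> set_pmf B)"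
    by (intro measure_pmf_prob_product) (auto intro: countable_subset)
  also have "\<dots> = measure (measure_pmf A) C * measure (measure_pmf B) D"
    by (simp add: measure_Int_set_pmf)
  finally show ?thesis .
qed

lemma indep2:
  assumes "finite S" "finite T" "S \<inter> T = {}" "dep S P" "dep T Q"
  shows "measure (measure_pmf (Pi_pmf (S \<union> T) d p)) {f. P f \<and> Q f} =
         measure (measure_pmf (Pi_pmf S d p)) {f. P f} * measure (measure_pmf (Pi_pmf T d p)) {f. Q f}"
proof -
  have "(\<lambda>(f,g) x. if x \<in> S then f x else g x) -` {f. P f \<and> Q f} = {f. P f} \<times> {f. Q f}"
  proof -
    have "P (\<lambda>x. if x \<in> S then f x else g x) = P f" for f g
      by (rule assms(4)[unfolded dep_def, rule_format]) simp
    moreover have "Q (\<lambda>x. if x \<in> S then f x else g x) = Q g" for f g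
      by (rule assms(5)[unfolded dep_def, rule_format]) (use assms(3) in auto)
    ultimately show ?thesis by auto
  qed
  then show ?thesis
    using assms by (simp add: Pi_pmf_union measure_pair_prod)
qed

lemma dep_all:
  fixes P :: "'j \<Rightarrow> ('a \<Rightarrow> 'b) \<Rightarrow> bool"
  assumes "\<forall>j\<in>J. dep (S j) (P j)"
  shows "dep (\<Union>j\<in>J. S j) (\<lambda>f. \<forall>j\<in>J. P j f)"
  unfolding dep_def
proof (intro allI impI)
  fix f g :: "'a \<Rightarrow> 'b" assume h: "\<forall>x\<in>(\<Union>i\<in>J. S i). f x = g x"
  have "P i f = P i g" if "i\<in>J" for i
    by (rule assms[rule_format, OF that, unfolded dep_def, rule_format]) (use h that in blast)
  then show "(\<forall>i\<in>J. P i f) = (\<forall>i\<in>J. P i g)" by blast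
qed

lemma dep_mono: "dep S P \<Longrightarrow> S \<subseteq> T \<Longrightarrow> dep T P"
  unfolding dep_def by blast

lemma indepX:
  assumes "finite X" "S \<subseteq> X" "T \<subseteq> X" "S \<inter> T = {}" "dep S P" "dep T Q"
  shows "measure (measure_pmf (Pi_pmf X d p)) {f. P f \<and> Q f} =
         measure (measure_pmf (Pi_pmf X d p)) {f. P f} * measure (measure_pmf (Pi_pmf X d p)) {f. Q f}"
proof -
  have fS: "finite S" "finite T" using finite_subset[OF assms(2,1)] finite_subset[OF assms(3,1)] .
  have dd: "dep (S \<union> T) (\<lambda>f. P f \<and> Q f)"
    unfolding dep_def
  proof (intro allI impI)
    fix f g :: "'a \<Rightarrow> 'b" assume h: "\<forall>x\<in>S \<union> T. f x = g x"
    have "P f = P g" by (rule assms(5)[unfolded dep_def, rule_format]) (use h in blast)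
    moreover have "Q f = Q g" by (rule assms(6)[unfolded dep_def, rule_format]) (use h in blast)
    ultimately show "(P f \<and> Q f) = (P g \<and> Q g)" by simp
  qed
  have su: "S \<union> T \<subseteq> X" using assms(2,3) by blast
  have "measure (measure_pmf (Pi_pmf X d p)) {f. P f \<and> Q f} =
     measure (measure_pmf (Pi_pmf (S \<union> T) d p)) {f. P f \<and> Q f}"
    by (rule prob_restr[OF assms(1) su dd])
  also have "\<dots> = measure (measure_pmf (Pi_pmf S d p)) {f. P f} * measure (measure_pmf (Pi_pmf T d p)) {f. Q f}"
    by (rule indep2[OF fS assms(4,5,6)])
  also have "measure (measure_pmf (Pi_pmf S d p)) {f. P f} = measure (measure_pmf (Pi_pmf X d p)) {f. P f}"
    by (rule prob_restr[OF assms(1,2,5), symmetric])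
  also have "measure (measure_pmf (Pi_pmf T d p)) {f. Q f} = measure (measure_pmf (Pi_pmf X d p)) {f. Q f}"
    by (rule prob_restr[OF assms(1,3,6), symmetric])
  finally show ?thesis .
qed

lemma indep_many:
  assumes "finite X" "finite J" "\<And>j. j \<in> J \<Longrightarrow> S j \<subseteq> X"
    "\<And>i j. i \<in> J \<Longrightarrow> j \<in> J \<Longrightarrow> i \<noteq> j \<Longrightarrow> S i \<inter> S j = {}"
    "\<And>j. j \<in> J \<Longrightarrow> dep (S j) (P j)"
  shows "measure (measure_pmf (Pi_pmf X d p)) {f. \<forall>j\<in>J. P j f} =
         (\<Prod>j\<in>J. measure (measure_pmf (Pi_pmf X d p)) {f. P j f})"
  using assms(2-5)
proof (induction J rule: finite_induct)
  case empty
  then show ?case by simp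
next
  case (insert j J)
  have d: "dep (\<Union>i\<in>J. S i) (\<lambda>f. \<forall>i\<in>J. P i f)"
    by (rule dep_all) (use insert.prems(3) in blast)
  have "{f. \<forall>i\<in>insert j J. P i f} = {f. P j f \<and> (\<forall>i\<in>J. P i f)}" by auto
  then have "measure (measure_pmf (Pi_pmf X d p)) {f. \<forall>i\<in>insert j J. P i f} =
     measure (measure_pmf (Pi_pmf X d p)) {f. P j f \<and> (\<forall>i\<in>J. P i f)}" by (rule arg_cong)
  also have "\<dots> =
     measure (measure_pmf (Pi_pmf X d p)) {f. P j f} * measure (measure_pmf (Pi_pmf X d p)) {f. \<forall>i\<in>J. P i f}"
  proof (rule indepX[of X "S j" "\<Union>i\<in>J. S i" "P j" "\<lambda>f. \<forall>i\<in>J. P i f"])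
    show "S j \<inter> (\<Union>i\<in>J. S i) = {}"
    proof (rule ccontr)
      assume "S j \<inter> (\<Union>i\<in>J. S i) \<noteq> {}"
      then obtain i x where "i \<in> J" "x \<in> S j" "x \<in> S i" by blast
      moreover have "i \<noteq> j" using \<open>i \<in> J\<close> insert.hyps(2) by blast
      ultimately show False using insert.prems(2)[of j i] by blast
    qed
    show "finite X" by (rule assms(1))
    show "S j \<subseteq> X" using insert.prems(1) by blast
    show "(\<Union>i\<in>J. S i) \<subseteq> X" using insert.prems(1) by blast
    show "dep (S j) (P j)" using insert.prems(3) by blast
    show "dep (\<Union>i\<in>J. S i) (\<lambda>f. \<forall>i\<in>J. P i f)" by (rule d)
  qed
  also have "measure (measure_pmf (Pi_pmf X d p)) {f. \<forall>i\<in>J. P i f} =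
     (\<Prod>i\<in>J. measure (measure_pmf (Pi_pmf X d p)) {f. P i f})"
    apply (rule insert.IH) using insert.prems by blast+
  also have "measure (measure_pmf (Pi_pmf X d p)) {f. P j f} * (\<Prod>i\<in>J. measure (measure_pmf (Pi_pmf X d p)) {f. P i f})
     = (\<Prod>i\<in>insert j J. measure (measure_pmf (Pi_pmf X d p)) {f. P i f})"
    by (rule prod.insert[symmetric]) (rule insert.hyps)+
  finally show ?case .
qed

lemma prob_not:
  "measure (measure_pmf M) {f. \<not> P f} = 1 - measure (measure_pmf M) {f. P f}"
proof -
  have "{f. \<not> P f} = space (measure_pmf M) - {f. P f}" by auto
  then show ?thesis using measure_pmf.prob_compl[of "{f. P f}" M] by simp
qed


definition slab :: "nat \<Rightarrow> (nat \<Rightarrow> nat) \<Rightarrow> nat \<Rightarrow> (nat \<Rightarrow> nat) \<Rightarrow> (nat \<Rightarrow> nat) set" where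
  "slab m n l a = {x \<in> pos_set m n. \<forall>i. l < i \<and> i \<le> m \<longrightarrow> x i = a i}"

lemma slab_sub: "slab m n l a \<subseteq> pos_set m n"
  unfolding slab_def by blast

lemma slab_mono: "slab m n l a \<subseteq> slab m n (Suc l) a"
  unfolding slab_def by auto

lemma slab_upd: "slab m n l (a(Suc l := b)) \<subseteq> slab m n (Suc l) a"
  unfolding slab_def by auto

lemma slab_disj: "Suc l \<le> m \<Longrightarrow> c \<noteq> c' \<Longrightarrow> slab m n l (a(Suc l := c)) \<inter> slab m n l (a(Suc l := c')) = {}"
  unfolding slab_def by auto

lemma slab_disj': "Suc l \<le> m \<Longrightarrow> c \<noteq> a (Suc l) \<Longrightarrow> slab m n l a \<inter> slab m n l (a(Suc l := c)) = {}"
  unfolding slab_def by auto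

lemma finite_pos: "finite (pos_set m n)"
  unfolding pos_set_def by (intro finite_PiE) auto

lemma dep_not: "dep S P \<Longrightarrow> dep S (\<lambda>f. \<not> P f)"
  unfolding dep_def by metis

lemma decoder_dep:
  fixes D :: "nat \<Rightarrow> ((nat\<Rightarrow>nat)\<Rightarrow>bool) \<Rightarrow> (nat\<Rightarrow>nat) \<Rightarrow> bool"
  assumes D0: "\<And>w a. D 0 w a = w a"
   and DS: "\<And>l w a. D (Suc l) w a = (D l w a \<or> (\<forall>b\<in>B l a. D l w (a(Suc l := b))))"
   and V1: "\<And>l a. V l a \<Longrightarrow> a \<in> pos_set m n \<and> l \<le> m"
   and V2: "\<And>l a. V (Suc l) a \<Longrightarrow> V l a"
   and V3: "\<And>l a b. V (Suc l) a \<Longrightarrow> b \<in> B l a \<Longrightarrow> V l (a(Suc l := b))"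
  shows "V l a \<Longrightarrow> dep (slab m n l a) (\<lambda>w. D l w a)"
proof (induction l arbitrary: a)
  case 0
  then have "a \<in> slab m n 0 a" using V1 unfolding slab_def by auto
  then show ?case unfolding dep_def D0 by blast
next
  case (Suc l)
  have i1: "dep (slab m n (Suc l) a) (\<lambda>w. D l w a)"
    by (rule dep_mono[OF Suc.IH[OF V2[OF Suc.prems]] slab_mono])
  have i2: "dep (slab m n (Suc l) a) (\<lambda>w. \<forall>b\<in>B l a. D l w (a(Suc l := b)))"
  proof (rule dep_mono[OF dep_all])
    show "\<forall>j\<in>B l a. dep (slab m n l (a(Suc l := j))) (\<lambda>w. D l w (a(Suc l := j)))"
      using Suc.IH V3[OF Suc.prems] by blast
    show "(\<Union>j\<in>B l a. slab m n l (a(Suc l := j))) \<subseteq> slab m n (Suc l) a"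
      using slab_upd by blast
  qed
  show ?case unfolding DS dep_def
  proof (intro allI impI)
    fix f g :: "(nat \<Rightarrow> nat) \<Rightarrow> bool" assume h: "\<forall>x\<in>slab m n (Suc l) a. f x = g x"
    have "D l f a = D l g a" using i1 h unfolding dep_def by blast
    moreover have "(\<forall>b\<in>B l a. D l f (a(Suc l := b))) = (\<forall>b\<in>B l a. D l g (a(Suc l := b)))"
      using i2 h unfolding dep_def by blast
    ultimately show "(D l f a \<or> (\<forall>b\<in>B l a. D l f (a(Suc l := b)))) =
      (D l g a \<or> (\<forall>b\<in>B l a. D l g (a(Suc l := b))))" by simp
  qed
qed

definition bmeas :: "nat \<Rightarrow> (nat \<Rightarrow> nat) \<Rightarrow> real \<Rightarrow> ((nat \<Rightarrow> nat) \<Rightarrow> bool) pmf" where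
  "bmeas m n eps = Pi_pmf (pos_set m n) undefined (\<lambda>_. bernoulli_pmf (1 - eps))"

lemma decoder_prob:
  fixes D :: "nat \<Rightarrow> ((nat\<Rightarrow>nat)\<Rightarrow>bool) \<Rightarrow> (nat\<Rightarrow>nat) \<Rightarrow> bool"
  assumes D0: "\<And>w a. D 0 w a = w a"
   and DS: "\<And>l w a. D (Suc l) w a = (D l w a \<or> (\<forall>b\<in>B l a. D l w (a(Suc l := b))))"
   and V1: "\<And>l a. V l a \<Longrightarrow> a \<in> pos_set m n \<and> l \<le> m"
   and V2: "\<And>l a. V (Suc l) a \<Longrightarrow> V l a"
   and V3: "\<And>l a b. V (Suc l) a \<Longrightarrow> b \<in> B l a \<Longrightarrow> V l (a(Suc l := b))"
   and VB: "\<And>l a. V (Suc l) a \<Longrightarrow> B l a \<subseteq> {1..n (Suc l)} - {a (Suc l)} \<and> card (B l a) = n (Suc l) - 1"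
   and e0: "0 \<le> eps" and e1: "eps \<le> 1"
  shows "V l a \<Longrightarrow> measure (measure_pmf (bmeas m n eps)) {w. \<not> D l w a} = eps_seq n eps l"
proof (induction l arbitrary: a)
  case 0
  have aX: "a \<in> pos_set m n" using V1[OF 0] by blast
  have "measure (measure_pmf (bmeas m n eps)) {w. \<not> D 0 w a}
      = measure (measure_pmf (map_pmf (\<lambda>f. f a) (bmeas m n eps))) {False}"
    by (simp add: D0 vimage_def)
  also have "map_pmf (\<lambda>f. f a) (bmeas m n eps) = bernoulli_pmf (1 - eps)"
    unfolding bmeas_def using aX finite_pos by (simp add: Pi_pmf_component)
  also have "measure (measure_pmf (bernoulli_pmf (1 - eps))) {False} = eps"
    using e0 e1 by (simp add: measure_pmf_single)
  finally show ?case by simp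
next
  case (Suc l)
  let ?M = "measure_pmf (bmeas m n eps)"
  let ?q = "eps_seq n eps l"
  have Va: "V l a" using V2[OF Suc.prems] .
  have lm: "Suc l \<le> m" using V1[OF Suc.prems] by blast
  have Bsub: "B l a \<subseteq> {1..n (Suc l)} - {a (Suc l)}" and Bcard: "card (B l a) = n (Suc l) - 1"
    using VB[OF Suc.prems] by blast+
  have Bfin: "finite (B l a)" using Bsub finite_subset by blast
  have dep_b: "dep (slab m n l (a(Suc l := b))) (\<lambda>w. D l w (a(Suc l := b)))" if "b \<in> B l a" for b
    by (rule decoder_dep[of D B V m n, OF D0 DS V1 V2 V3 V3[OF Suc.prems that]])
  have "{w. \<not> D (Suc l) w a} = {w. \<not> D l w a \<and> \<not> (\<forall>b\<in>B l a. D l w (a(Suc l := b)))}"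
    by (simp add: DS)
  then have "measure ?M {w. \<not> D (Suc l) w a} =
      measure ?M {w. \<not> D l w a \<and> \<not> (\<forall>b\<in>B l a. D l w (a(Suc l := b)))}" by (rule arg_cong)
  also have "\<dots> = measure ?M {w. \<not> D l w a} * measure ?M {w. \<not> (\<forall>b\<in>B l a. D l w (a(Suc l := b)))}"
    unfolding bmeas_def
  proof (rule indepX[of _ "slab m n l a" "\<Union>b\<in>B l a. slab m n l (a(Suc l := b))"])
    show "finite (pos_set m n)" by (rule finite_pos)
    show "slab m n l a \<subseteq> pos_set m n" by (rule slab_sub)
    show "(\<Union>b\<in>B l a. slab m n l (a(Suc l := b))) \<subseteq> pos_set m n" using slab_sub by blast
    show "slab m n l a \<inter> (\<Union>b\<in>B l a. slab m n l (a(Suc l := b))) = {}"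
      using slab_disj'[OF lm] Bsub by blast
    show "dep (slab m n l a) (\<lambda>w. \<not> D l w a)"
      by (rule dep_not[OF decoder_dep[of D B V m n, OF D0 DS V1 V2 V3 Va]])
    show "dep (\<Union>b\<in>B l a. slab m n l (a(Suc l := b))) (\<lambda>w. \<not> (\<forall>b\<in>B l a. D l w (a(Suc l := b))))"
      by (rule dep_not[OF dep_all]) (use dep_b in blast)
  qed
  also have "measure ?M {w. \<not> D l w a} = ?q" by (rule Suc.IH[OF Va])
  also have "measure ?M {w. \<not> (\<forall>b\<in>B l a. D l w (a(Suc l := b)))} =
       1 - measure ?M {w. \<forall>b\<in>B l a. D l w (a(Suc l := b))}" by (rule prob_not)
  also have "measure ?M {w. \<forall>b\<in>B l a. D l w (a(Suc l := b))} =
      (\<Prod>b\<in>B l a. measure ?M {w. D l w (a(Suc l := b))})"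
    unfolding bmeas_def
  proof (rule indep_many[where S="\<lambda>b. slab m n l (a(Suc l := b))"])
    show "finite (pos_set m n)" by (rule finite_pos)
    show "finite (B l a)" by (rule Bfin)
    show "slab m n l (a(Suc l := j)) \<subseteq> pos_set m n" for j by (rule slab_sub)
    show "slab m n l (a(Suc l := i)) \<inter> slab m n l (a(Suc l := j)) = {}" if "i \<noteq> j" for i j
      by (rule slab_disj[OF lm that])
    show "dep (slab m n l (a(Suc l := j))) (\<lambda>w. D l w (a(Suc l := j)))" if "j \<in> B l a" for j
      by (rule dep_b[OF that])
  qed
  also have "\<dots> = (\<Prod>b\<in>B l a. 1 - ?q)"
  proof (rule prod.cong[OF refl])
    fix b assume "b \<in> B l a"
    have "measure ?M {w. \<not> D l w (a(Suc l := b))} = ?q"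
      by (rule Suc.IH[OF V3[OF Suc.prems \<open>b \<in> B l a\<close>]])
    then show "measure ?M {w. D l w (a(Suc l := b))} = 1 - ?q"
      using prob_not[of "bmeas m n eps" "\<lambda>w. D l w (a(Suc l := b))"] by simp
  qed
  also have "\<dots> = (1 - ?q) ^ (n (Suc l) - 1)" using Bcard by simp
  finally show ?case by simp
qed


lemma set_bmeas: "f \<in> set_pmf (bmeas m n eps) \<Longrightarrow> \<forall>x. x \<notin> pos_set m n \<longrightarrow> f x = undefined"
  unfolding bmeas_def
  apply (drule subsetD[OF set_Pi_pmf_subset[OF finite_pos[of m n]]])
  apply (erule CollectD)
  done

lemma ext_PiE: "\<forall>x. x \<notin> X \<longrightarrow> f x = (undefined::bool) \<Longrightarrow> f \<in> PiE X (\<lambda>_. UNIV :: bool set)"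
  unfolding PiE_def extensional_def Pi_def by blast

lemma bec_eq:
  assumes e0: "0 \<le> eps" and e1: "eps \<le> 1"
  shows "bec_prob m n eps P = measure (measure_pmf (bmeas m n eps)) {w. P w}"
proof -
  let ?X = "pos_set m n"
  let ?M = "bmeas m n eps"
  let ?S = "PiE ?X (\<lambda>_. UNIV :: bool set)"
  have fb: "finite (UNIV :: bool set)" by (simp add: UNIV_bool)
  have finS: "finite ?S" by (rule finite_PiE[OF finite_pos fb])
  have setM: "set_pmf ?M \<subseteq> ?S"
  proof
    fix f assume "f \<in> set_pmf ?M"
    then show "f \<in> ?S" by (intro ext_PiE set_bmeas)
  qed
  have "measure (measure_pmf ?M) {w. P w} = measure (measure_pmf ?M) ({w. P w} \<inter> set_pmf ?M)"
    by (rule measure_Int_set_pmf[symmetric])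
  also have "{w. P w} \<inter> set_pmf ?M = ({w. P w} \<inter> ?S) \<inter> set_pmf ?M" using setM by blast
  also have "measure (measure_pmf ?M) \<dots> = measure (measure_pmf ?M) ({w. P w} \<inter> ?S)"
    by (rule measure_Int_set_pmf)
  also have "\<dots> = sum (pmf ?M) ({w. P w} \<inter> ?S)"
    by (rule measure_measure_pmf_finite[OF finite_Int[OF disjI2[OF finS]]])
  also have "\<dots> = sum (pmf ?M) (?S \<inter> {w. P w})" by (simp add: Int_commute)
  also have "\<dots> = (\<Sum>w\<in>?S. if P w then pmf ?M w else 0)"
    by (subst sum.inter_restrict[OF finS]) (simp only: mem_Collect_eq)
  also have "\<dots> = bec_prob m n eps P"
    unfolding bec_prob_def
  proof (rule sum.cong[OF refl])
    fix w assume w: "w \<in> ?S"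
    have "pmf ?M w = (\<Prod>a\<in>?X. pmf (bernoulli_pmf (1 - eps)) (w a))"
    proof -
      have "\<forall>x. x \<notin> ?X \<longrightarrow> w x = undefined" using w PiE_arb by blast
      then show ?thesis unfolding bmeas_def by (simp add: pmf_Pi[OF finite_pos])
    qed
    also have "\<dots> = (\<Prod>a\<in>?X. if w a then 1 - eps else eps)"
    proof (rule prod.cong[OF refl])
      fix a show "pmf (bernoulli_pmf (1 - eps)) (w a) = (if w a then 1 - eps else eps)"
        using e0 e1 by (cases "w a") simp_all
    qed
    finally show "(if P w then pmf ?M w else 0) = (if P w then \<Prod>a\<in>?X. if w a then 1 - eps else eps else 0)"
      by simp
  qed
  finally show ?thesis ..
qed

lemma upd_pos: "a \<in> pos_set m n \<Longrightarrow> 1 \<le> k \<Longrightarrow> k \<le> m \<Longrightarrow> b \<in> {1..n k} \<Longrightarrow> a(k := b) \<in> pos_set m n"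
  unfolding pos_set_def by (auto simp: PiE_iff extensional_def)

lemma elias_prob:
  assumes e0: "0 \<le> eps" and e1: "eps \<le> 1" and aX: "a \<in> pos_set m n" and lm: "l \<le> m"
  shows "measure (measure_pmf (bmeas m n eps)) {w. \<not> elias n l w a} = eps_seq n eps l"
proof -
  have D0: "\<And>w a. elias n 0 w a = w a" by simp
  have DS: "\<And>l w a. elias n (Suc l) w a = (elias n l w a \<or>
     (\<forall>b\<in>{1..n (Suc l)} - {a (Suc l)}. elias n l w (a(Suc l := b))))" by simp
  have V1: "\<And>l a. a \<in> pos_set m n \<and> l \<le> m \<Longrightarrow> a \<in> pos_set m n \<and> l \<le> m" by simp
  have V2: "\<And>l a. a \<in> pos_set m n \<and> Suc l \<le> m \<Longrightarrow> a \<in> pos_set m n \<and> l \<le> m" by simp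
  have V3: "\<And>l a b. a \<in> pos_set m n \<and> Suc l \<le> m \<Longrightarrow> b \<in> {1..n (Suc l)} - {a (Suc l)} \<Longrightarrow>
      a(Suc l := b) \<in> pos_set m n \<and> l \<le> m"
    using upd_pos by auto
  have VB: "\<And>l a. a \<in> pos_set m n \<and> Suc l \<le> m \<Longrightarrow>
      {1..n (Suc l)} - {a (Suc l)} \<subseteq> {1..n (Suc l)} - {a (Suc l)} \<and>
      card ({1..n (Suc l)} - {a (Suc l)}) = n (Suc l) - 1"
  proof -
    fix l a assume h: "a \<in> pos_set m n \<and> Suc l \<le> m"
    then have "a (Suc l) \<in> {1..n (Suc l)}" unfolding pos_set_def by (auto simp: PiE_iff)
    then show "{1..n (Suc l)} - {a (Suc l)} \<subseteq> {1..n (Suc l)} - {a (Suc l)} \<and>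
      card ({1..n (Suc l)} - {a (Suc l)}) = n (Suc l) - 1" by (simp add: card_Diff_singleton)
  qed
  show ?thesis
    apply (rule decoder_prob[where D="elias n" and B="\<lambda>l a. {1..n (Suc l)} - {a (Suc l)}"
      and V="\<lambda>l a. a \<in> pos_set m n \<and> l \<le> m" and m=m and n=n and eps=eps and l=l and a=a])
    apply (rule D0) apply (rule DS) apply (erule V1) apply (erule V2) apply (erule (1) V3)
    apply (erule VB) apply (rule e0) apply (rule e1)
    using aX lm by simp
qed

lemma sc_prob:
  assumes e0: "0 \<le> eps" and e1: "eps \<le> 1" and aX: "a \<in> pos_set m n" and lm: "l \<le> m"
    and a1: "\<forall>i. 1 \<le> i \<and> i \<le> l \<longrightarrow> a i = 1"
  shows "measure (measure_pmf (bmeas m n eps)) {w. \<not> sc n l w a} = eps_seq n eps l"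
proof -
  have D0: "\<And>w a. sc n 0 w a = w a" by simp
  have DS: "\<And>l w a. sc n (Suc l) w a = (sc n l w a \<or>
     (\<forall>b\<in>{a (Suc l)<..n (Suc l)}. sc n l w (a(Suc l := b))))" by simp
  have V1: "\<And>l a. a \<in> pos_set m n \<and> l \<le> m \<and> (\<forall>i. 1 \<le> i \<and> i \<le> l \<longrightarrow> a i = 1) \<Longrightarrow> a \<in> pos_set m n \<and> l \<le> m" by simp
  have V2: "\<And>l a. a \<in> pos_set m n \<and> Suc l \<le> m \<and> (\<forall>i. 1 \<le> i \<and> i \<le> Suc l \<longrightarrow> a i = 1) \<Longrightarrow>
      a \<in> pos_set m n \<and> l \<le> m \<and> (\<forall>i. 1 \<le> i \<and> i \<le> l \<longrightarrow> a i = 1)" by simp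
  have V3: "\<And>l a b. a \<in> pos_set m n \<and> Suc l \<le> m \<and> (\<forall>i. 1 \<le> i \<and> i \<le> Suc l \<longrightarrow> a i = 1) \<Longrightarrow>
      b \<in> {a (Suc l)<..n (Suc l)} \<Longrightarrow>
      a(Suc l := b) \<in> pos_set m n \<and> l \<le> m \<and> (\<forall>i. 1 \<le> i \<and> i \<le> l \<longrightarrow> (a(Suc l := b)) i = 1)"
  proof -
    fix l a b assume h: "a \<in> pos_set m n \<and> Suc l \<le> m \<and> (\<forall>i. 1 \<le> i \<and> i \<le> Suc l \<longrightarrow> a i = 1)"
      and b: "b \<in> {a (Suc l)<..n (Suc l)}"
    have "a (Suc l) = 1" using h by simp
    then have "b \<in> {1..n (Suc l)}" using b by auto
    then have "a(Suc l := b) \<in> pos_set m n" using upd_pos h by auto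
    then show "a(Suc l := b) \<in> pos_set m n \<and> l \<le> m \<and> (\<forall>i. 1 \<le> i \<and> i \<le> l \<longrightarrow> (a(Suc l := b)) i = 1)"
      using h by auto
  qed
  have VB: "\<And>l a. a \<in> pos_set m n \<and> Suc l \<le> m \<and> (\<forall>i. 1 \<le> i \<and> i \<le> Suc l \<longrightarrow> a i = 1) \<Longrightarrow>
      {a (Suc l)<..n (Suc l)} \<subseteq> {1..n (Suc l)} - {a (Suc l)} \<and>
      card {a (Suc l)<..n (Suc l)} = n (Suc l) - 1"
  proof -
    fix l a assume h: "a \<in> pos_set m n \<and> Suc l \<le> m \<and> (\<forall>i. 1 \<le> i \<and> i \<le> Suc l \<longrightarrow> a i = 1)"
    then have "a (Suc l) = 1" by simp
    then show "{a (Suc l)<..n (Suc l)} \<subseteq> {1..n (Suc l)} - {a (Suc l)} \<and>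
      card {a (Suc l)<..n (Suc l)} = n (Suc l) - 1" by auto
  qed
  show ?thesis
    apply (rule decoder_prob[where D="sc n" and B="\<lambda>l a. {a (Suc l)<..n (Suc l)}"
      and V="\<lambda>l a. a \<in> pos_set m n \<and> l \<le> m \<and> (\<forall>i. 1 \<le> i \<and> i \<le> l \<longrightarrow> a i = 1)" and m=m and n=n and eps=eps and l=l and a=a])
    apply (rule D0) apply (rule DS) apply (erule V1) apply (erule V2) apply (erule (1) V3)
    apply (erule VB) apply (rule e0) apply (rule e1)
    using aX lm a1 by simp
qed

theorem lemma1:
  fixes m :: nat and n :: "nat \<Rightarrow> nat" and eps :: real
  assumes "m \<ge> 1"
    and "\<forall>i \<in> {1..m}. n i \<ge> 2"
    and "0 \<le> eps" and "eps \<le> 1"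
  shows "(\<forall>a \<in> info_set m n.
            bec_prob m n eps (\<lambda>w. \<not> sc n m w (restrict (\<lambda>_. 1) {1..m}))
              = bec_prob m n eps (\<lambda>w. \<not> elias n m w a))
       \<and> bec_prob m n eps (\<lambda>w. \<not> sc n m w (restrict (\<lambda>_. 1) {1..m})) = eps_seq n eps m"
proof -
  have oneX: "restrict (\<lambda>_. 1) {1..m} \<in> pos_set m n"
    unfolding pos_set_def
  proof (rule restrict_PiE_iff[THEN iffD2], intro ballI)
    fix i :: nat assume "i \<in> {1..m}"
    then have "n i \<ge> 2" using assms(2) by blast
    then show "1 \<in> {1..n i}" by simp
  qed
  have a1: "\<forall>i. 1 \<le> i \<and> i \<le> m \<longrightarrow> restrict (\<lambda>_. 1::nat) {1..m} i = 1" by simp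
  have sc1: "bec_prob m n eps (\<lambda>w. \<not> sc n m w (restrict (\<lambda>_. 1) {1..m})) = eps_seq n eps m"
    unfolding bec_eq[OF assms(3,4)]
    by (rule sc_prob[OF assms(3,4) oneX order_refl a1])
  have el: "bec_prob m n eps (\<lambda>w. \<not> elias n m w a) = eps_seq n eps m" if "a \<in> info_set m n" for a
  proof -
    have "info_set m n \<subseteq> pos_set m n" unfolding info_set_def pos_set_def
      by (rule PiE_mono) auto
    then have "a \<in> pos_set m n" using that by blast
    then show ?thesis unfolding bec_eq[OF assms(3,4)]
      by (rule elias_prob[OF assms(3,4) _ order_refl])
  qed
  show ?thesis
  proof (intro conjI ballI)
    fix a assume "a \<in> info_set m n"
    then show "bec_prob m n eps (\<lambda>w. \<not> sc n m w (restrict (\<lambda>_. 1) {1..m}))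
              = bec_prob m n eps (\<lambda>w. \<not> elias n m w a)"
      by (simp only: sc1 el)
  next
    show "bec_prob m n eps (\<lambda>w. \<not> sc n m w (restrict (\<lambda>_. 1) {1..m})) = eps_seq n eps m"
      by (rule sc1)
  qed
qed

end
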